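(* Let $\sigma:S\to\{\bullet\}$ be the map from the Sierpinski space $S=\{o,c\}$ (open sets $\emptyset,\{o\},\{o,c\}$) to the one-point space. Then $\{\sigma\}^r$ (in $\mathrm{Top}$) is the class of continuous maps $p:X\to Y$ such that every fibre $p^{-1}(y)$, $y\in Y$, with the subspace topology, satisfies the separation axiom $T_1$.
   Context: For continuous maps $f:A\to B$, $g:C\to D$, $f\pitchfork g$ means: for all continuous $t:A\to C$, $b:B\to D$ with $g\circ t=b\circ f$ there is continuous $d:B\to C$ with $d\circ f=t$, $g\circ d=b$. For a class $P$, $P^r=\{g: f\pitchfork g\ \forall f\in P\}$. *)

theory Defs
  imports "HOL-Analysis.Analysis"
begin

text \<open>Lifting property: f has the left lifting property w.r.t. g.
  All equalities of maps are required on the underlying point sets (topspaces).\<close>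
definition lifting_prop ::
  "'a topology \<Rightarrow> 'b topology \<Rightarrow> ('a \<Rightarrow> 'b) \<Rightarrow> 'c topology \<Rightarrow> 'd topology \<Rightarrow> ('c \<Rightarrow> 'd) \<Rightarrow> bool"
  where
  "lifting_prop A B f C D g \<longleftrightarrow>
     (\<forall>t b. continuous_map A C t \<and> continuous_map B D b \<and>
            (\<forall>x\<in>topspace A. g (t x) = b (f x)) \<longrightarrow>
        (\<exists>d. continuous_map B C d \<and>
             (\<forall>x\<in>topspace A. d (f x) = t x) \<and>
             (\<forall>y\<in>topspace B. g (d y) = b y)))"

text \<open>Sierpinski space on bool: o = True, c = False; open sets {}, {True}, UNIV.\<close>
definition sierpinski_space :: "bool topology" where
  "sierpinski_space = topology (\<lambda>U. U \<in> {{}, {True}, UNIV})"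

lemma openin_sierpinski_space:
  "openin sierpinski_space U \<longleftrightarrow> U \<in> {{}, {True}, UNIV}"
proof -
  have "istopology (\<lambda>U. U \<in> {{}, {True}, (UNIV::bool set)})"
    unfolding istopology_def by auto
  then show ?thesis
    unfolding sierpinski_space_def by (simp add: topology_inverse')
qed

definition point_space :: "unit topology" where
  "point_space = discrete_topology UNIV"

definition sigma_map :: "bool \<Rightarrow> unit" where
  "sigma_map x = ()"

end

theory Submission
  imports Defs
begin

lemma topspace_sier: "topspace sierpinski_space = UNIV"
  unfolding topspace_def openin_sierpinski_space by auto
lemma B: "{x \<in> topspace sierpinski_space. t x \<in> U} \<in> {{}, {True}, UNIV} \<longleftrightarrow> (t False \<in> U \<longrightarrow> t True \<in> U)"
    by (simp add: topspace_sier set_eq_iff all_bool_eq) blast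
lemma A: "(t \<in> topspace sierpinski_space \<rightarrow> topspace X) \<longleftrightarrow> t True \<in> topspace X \<and> t False \<in> topspace X"
    by (simp add: Pi_iff topspace_sier all_bool_eq)
lemma cont_sier:
  "continuous_map sierpinski_space X t \<longleftrightarrow>
    t True \<in> topspace X \<and> t False \<in> topspace X \<and>
    (\<forall>U. openin X U \<longrightarrow> t False \<in> U \<longrightarrow> t True \<in> U)"
  unfolding continuous_map_def openin_sierpinski_space A B by blast

theorem mainTheorem5:
  fixes X :: "'a topology" and Y :: "'b topology" and p :: "'a \<Rightarrow> 'b"
  assumes "continuous_map X Y p"
  shows "lifting_prop sierpinski_space point_space sigma_map X Y p \<longleftrightarrow>
         (\<forall>y\<in>topspace Y. t1_space (subtopology X {x \<in> topspace X. p x = y}))"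
proof
  assume L: "lifting_prop sierpinski_space point_space sigma_map X Y p"
  show "\<forall>y\<in>topspace Y. t1_space (subtopology X {x \<in> topspace X. p x = y})"
  proof (intro ballI)
    fix y assume y: "y \<in> topspace Y"
    let ?F = "{x \<in> topspace X. p x = y}"
    show "t1_space (subtopology X ?F)"
      unfolding t1_space_def
    proof (intro ballI impI)
      fix a c assume a: "a \<in> topspace (subtopology X ?F)" and c: "c \<in> topspace (subtopology X ?F)"
        and ne: "a \<noteq> c"
      show "\<exists>U. openin (subtopology X ?F) U \<and> a \<in> U \<and> c \<notin> U"
      proof (rule ccontr)
        assume N: "\<not> ?thesis"
        have H: "\<forall>U. openin X U \<longrightarrow> a \<in> U \<longrightarrow> c \<in> U"
        proof (intro allI impI)
          fix U assume "openin X U" "a \<in> U"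
          then have "openin (subtopology X ?F) (U \<inter> ?F)" by (auto simp: openin_subtopology)
          moreover have "a \<in> U \<inter> ?F" using a \<open>a \<in> U\<close> by simp
          ultimately have "c \<in> U \<inter> ?F" using N by blast
          then show "c \<in> U" by blast
        qed
        define t where "t = (\<lambda>b. if b then c else a)"
        have ct: "continuous_map sierpinski_space X t"
          unfolding cont_sier t_def using a c H by auto
        have cb: "continuous_map point_space Y (\<lambda>_. y)" using y by simp
        have "\<forall>x\<in>topspace sierpinski_space. p (t x) = y" using a c by (auto simp: t_def)
        then obtain d where d: "\<forall>x\<in>topspace sierpinski_space. d (sigma_map x) = t x"
          using L[unfolded lifting_prop_def, rule_format, of t "\<lambda>_. y"] ct cb
          by (auto simp: sigma_map_def)
        have "d () = c" "d () = a" using d[rule_format, of True] d[rule_format, of False]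
          by (auto simp: topspace_sier t_def sigma_map_def)
        then have "a = c" by simp
        with ne show False by simp
      qed
    qed
  qed
next
  assume R: "\<forall>y\<in>topspace Y. t1_space (subtopology X {x \<in> topspace X. p x = y})"
  show "lifting_prop sierpinski_space point_space sigma_map X Y p"
    unfolding lifting_prop_def
  proof (intro allI impI)
    fix t b assume H: "continuous_map sierpinski_space X t \<and> continuous_map point_space Y b \<and>
            (\<forall>x\<in>topspace sierpinski_space. p (t x) = b (sigma_map x))"
    let ?y = "b ()"
    let ?F = "{x \<in> topspace X. p x = ?y}"
    have y: "?y \<in> topspace Y" using H by (auto simp: point_space_def continuous_map_def)
    have ct: "t True \<in> topspace X" "t False \<in> topspace X"
      "\<forall>U. openin X U \<longrightarrow> t False \<in> U \<longrightarrow> t True \<in> U" using H[THEN conjunct1, unfolded cont_sier] by blast+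
    have pf: "p (t True) = ?y" "p (t False) = ?y" using H by (auto simp: topspace_sier sigma_map_def)
    have eq: "t False = t True"
    proof (rule ccontr)
      assume ne: "t False \<noteq> t True"
      have t1: "t1_space (subtopology X ?F)" using R y by blast
      have mem: "t False \<in> topspace (subtopology X ?F)" "t True \<in> topspace (subtopology X ?F)"
        using ct pf by auto
      obtain U where "openin (subtopology X ?F) U" "t False \<in> U" "t True \<notin> U"
        using t1 mem ne unfolding t1_space_def by blast
      then obtain T where "openin X T" "U = T \<inter> ?F" by (auto simp: openin_subtopology)
      then show False using ct pf \<open>t False \<in> U\<close> \<open>t True \<notin> U\<close> by auto
    qed
    show "\<exists>d. continuous_map point_space X d \<and>
             (\<forall>x\<in>topspace sierpinski_space. d (sigma_map x) = t x) \<and>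
             (\<forall>y\<in>topspace point_space. p (d y) = b y)"
    proof (intro exI conjI)
      show "continuous_map point_space X (\<lambda>_. t True)" using ct(1) unfolding continuous_map_def point_space_def by auto
      show "\<forall>x\<in>topspace sierpinski_space. t True = t x" using eq by (simp add: all_bool_eq topspace_sier)
      show "\<forall>u\<in>topspace point_space. p (t True) = b u" using pf by (metis old.unit.exhaust)
    qed
  qed
qed

end
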